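(* Let $0\le\alpha\le\beta$ be fixed. Let $(q_n)_{n\ge1}$ and $(p_n)_{n\ge1}$ be sequences with $q_n\in(0,1)$ and $p_n\in(q_n,1]$ for all $n$, such that $\lim_{n\to\infty}p_n=1$, $\lim_{n\to\infty}q_n=1$, $\lim_{n\to\infty}p_n^n=1$ and $\lim_{n\to\infty}q_n^n=1$. Then for every $f\in C[0,1]$, $S_{n,p_n,q_n}(f;x)$ converges to $f(x)$ uniformly on $[0,1]$ as $n\to\infty$, i.e. $\lim_{n\to\infty}\sup_{x\in[0,1]}|S_{n,p_n,q_n}(f;x)-f(x)|=0$.
   Context: For $p>0$, $q>0$ and integers $m\ge 0$, the $(p,q)$-integer is $[m]_{p,q}=p^{m-1}+p^{m-2}q+\cdots+pq^{m-2}+q^{m-1}$ (so $[m]_{p,q}=\frac{p^m-q^m}{p-q}$ when $p\ne q$, and $[0]_{p,q}=0$). The $(p,q)$-factorial is $[m]_{p,q}!=[1]_{p,q}[2]_{p,q}\cdots[m]_{p,q}$ with $[0]_{p,q}!=1$, and the $(p,q)$-binomial coefficient is $\left[\begin{smallmatrix} n\\ k\end{smallmatrix}\right]_{p,q}=\frac{[n]_{p,q}!}{[k]_{p,q}!\,[n-k]_{p,q}!}$ for $0\le k\le n$. For $f\in C[0,1]$, real parameters $0\le\alpha\le\beta$, and $x\in[0,1]$, the $(p,q)$-Bernstein–Stancu operator is $$S_{n,p,q}(f;x)=\frac{1}{p^{n(n-1)/2}}\sum_{k=0}^{n}\left[\begin{smallmatrix} n\\ k\end{smallmatrix}\right]_{p,q}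 p^{k(k-1)/2}\,x^{k}\prod_{s=0}^{n-k-1}(p^{s}-q^{s}x)\; f\!\left(\frac{p^{n-k}[k]_{p,q}+\alpha}{[n]_{p,q}+\beta}\right),$$ where an empty product (when $k=n$) equals $1$. *)

theory Defs
  imports "HOL-Analysis.Analysis"
begin

definition pq_int :: "nat \<Rightarrow> real \<Rightarrow> real \<Rightarrow> real" where
  "pq_int m p q = (\<Sum>j<m. p ^ (m - 1 - j) * q ^ j)"

definition pq_fact :: "nat \<Rightarrow> real \<Rightarrow> real \<Rightarrow> real" where
  "pq_fact m p q = (\<Prod>i=1..m. pq_int i p q)"

definition pq_binom :: "nat \<Rightarrow> nat \<Rightarrow> real \<Rightarrow> real \<Rightarrow> real" where
  "pq_binom n k p q = pq_fact n p q / (pq_fact k p q * pq_fact (n - k) p q)"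

definition pq_bernstein_stancu ::
  "real \<Rightarrow> real \<Rightarrow> nat \<Rightarrow> real \<Rightarrow> real \<Rightarrow> (real \<Rightarrow> real) \<Rightarrow> real \<Rightarrow> real" where
  "pq_bernstein_stancu \<alpha> \<beta> n p q f x =
     (1 / p ^ (n * (n - 1) div 2)) *
     (\<Sum>k=0..n. pq_binom n k p q * p ^ (k * (k - 1) div 2) * x ^ k *
        (\<Prod>s=0..<n-k. p ^ s - q ^ s * x) *
        f ((p ^ (n - k) * pq_int k p q + \<alpha>) / (pq_int n p q + \<beta>)))"

end

theory Submission imports Defs begin

lemma pq_int_closed: "pq_int m p q * (p - q) = p^m - q^m"
proof -
  have "q^m - p^m = (q - p) * (\<Sum>i<m. p^(m - Suc i) * q^i)" by (rule power_diff_sumr2)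
  moreover have "pq_int m p q = (\<Sum>i<m. p^(m - Suc i) * q^i)" unfolding pq_int_def by simp
  ultimately show ?thesis by (simp add: algebra_simps)
qed

lemma pq_int_eq: "p \<noteq> q \<Longrightarrow> pq_int m p q = (p^m - q^m) / (p - q)"
  using pq_int_closed[of m p q] by (simp add: field_simps)

lemma pq_int_0[simp]: "pq_int 0 p q = 0" by (simp add: pq_int_def)

lemma pq_int_ge: assumes "0 \<le> q" "q \<le> p" shows "pq_int m p q \<ge> real m * q^(m-1)"
proof -
  have "(\<Sum>j<m. q^(m-1)) \<le> (\<Sum>j<m. p ^ (m - 1 - j) * q ^ j)"
  proof (rule sum_mono)
    fix j assume j: "j \<in> {..<m}"
    have "q^(m-1) = q^(m-1-j) * q^j" using j by (simp add: power_add[symmetric])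
    also have "\<dots> \<le> p^(m-1-j) * q^j" using assms by (intro mult_right_mono power_mono) auto
    finally show "q^(m-1) \<le> p ^ (m - 1 - j) * q ^ j" .
  qed
  then show ?thesis by (simp add: pq_int_def)
qed

lemma pq_int_pos: assumes "0 < q" "q \<le> p" "m \<ge> 1" shows "pq_int m p q > 0"
proof -
  have "real m * q^(m-1) > 0" using assms by simp
  then show ?thesis using pq_int_ge[of q p m] assms by linarith
qed

lemma pq_int_split: assumes "p \<noteq> q" shows "pq_int (a+b) p q = p^b * pq_int a p q + q^a * pq_int b p q"
proof -
  have "(pq_int (a+b) p q - (p^b * pq_int a p q + q^a * pq_int b p q)) * (p - q)
     = pq_int (a+b) p q * (p - q) - p^b * (pq_int a p q * (p - q)) - q^a * (pq_int b p q * (p - q))"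
    by (simp add: algebra_simps)
  also have "\<dots> = 0" unfolding pq_int_closed by (simp add: algebra_simps power_add)
  finally have "(pq_int (a+b) p q - (p^b * pq_int a p q + q^a * pq_int b p q)) * (p - q) = 0" .
  then show ?thesis using assms by simp
qed

lemma pq_int_split2: assumes "p \<noteq> q" shows "pq_int (a+b) p q = q^b * pq_int a p q + p^a * pq_int b p q"
proof -
  have "(pq_int (a+b) p q - (q^b * pq_int a p q + p^a * pq_int b p q)) * (p - q)
     = pq_int (a+b) p q * (p - q) - q^b * (pq_int a p q * (p - q)) - p^a * (pq_int b p q * (p - q))"
    by (simp add: algebra_simps)
  also have "\<dots> = 0" unfolding pq_int_closed by (simp add: algebra_simps power_add)
  finally have "(pq_int (a+b) p q - (q^b * pq_int a p q + p^a * pq_int b p q)) * (p - q) = 0" .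
  then show ?thesis using assms by simp
qed

lemma pq_fact_0[simp]: "pq_fact 0 p q = 1" by (simp add: pq_fact_def)
lemma pq_fact_Suc: "pq_fact (Suc m) p q = pq_fact m p q * pq_int (Suc m) p q"
  by (simp add: pq_fact_def prod.nat_ivl_Suc')

lemma pq_fact_pos: assumes "0 < q" "q \<le> p" shows "pq_fact m p q > 0"
  using assms by (induction m) (auto simp: pq_fact_Suc pq_int_pos)

lemma pq_fact_nz: assumes "0 < q" "q \<le> p" shows "pq_fact m p q \<noteq> 0"
  using pq_fact_pos[OF assms] by (metis less_irrefl)

definition cb :: "real \<Rightarrow> real \<Rightarrow> nat \<Rightarrow> nat \<Rightarrow> real" where
  "cb p q n k = (if k \<le> n then pq_binom n k p q else 0)"

lemma binom_fact: assumes "0 < q" "q \<le> p" "k \<le> n"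
  shows "pq_binom n k p q * pq_fact k p q * pq_fact (n-k) p q = pq_fact n p q"
  using pq_fact_pos[OF assms(1,2), of k] pq_fact_pos[OF assms(1,2), of "n-k"] unfolding pq_binom_def
  by (simp add: field_simps)

lemma cb_0[simp]: assumes "0 < q" "q \<le> p" shows "cb p q n 0 = 1"
  using pq_fact_nz[OF assms(1,2)] by (simp add: cb_def pq_binom_def)

lemma cb_nonneg: assumes "0 < q" "q \<le> p" shows "cb p q n k \<ge> 0"
  using pq_fact_pos[OF assms(1,2), of n] pq_fact_pos[OF assms(1,2), of k] pq_fact_pos[OF assms(1,2), of "n-k"]
  by (simp add: cb_def pq_binom_def)

lemma cb_pascal: assumes "0 < q" "q < p"
  shows "cb p q (Suc n) (Suc k) = q^(n-k) * cb p q n k + p^(Suc k) * cb p q n (Suc k)"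
proof (cases "k \<le> n")
  case False then show ?thesis by (simp add: cb_def)
next
  case True
  note fp = pq_fact_pos[OF assms(1) less_imp_le[OF assms(2)]]
  have pq: "p \<noteq> q" using assms by simp
  show ?thesis
  proof (cases "k = n")
    case True
    then show ?thesis using fp[of "Suc n"] fp[of n] by (simp add: cb_def pq_binom_def)
  next
    case False
    with \<open>k \<le> n\<close> have kn: "k < n" by simp
    obtain d where d: "n = k + Suc d" using kn less_iff_Suc_add by auto
    have e1: "Suc n - Suc k = Suc d" "n - k = Suc d" "n - Suc k = d" using d by auto
    have sp: "pq_int (Suc n) p q = q^(Suc d) * pq_int (Suc k) p q + p^(Suc k) * pq_int (Suc d) p q"
      using pq_int_split2[OF pq, of "Suc k" "Suc d"] d by simp
    have ip: "pq_int (Suc k) p q > 0" "pq_int (Suc d) p q > 0"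
      using pq_int_pos[OF assms(1) less_imp_le[OF assms(2)]] by auto
    have "cb p q (Suc n) (Suc k) = pq_fact n p q * pq_int (Suc n) p q /
       (pq_fact k p q * pq_int (Suc k) p q * (pq_fact d p q * pq_int (Suc d) p q))"
      using kn by (simp add: cb_def pq_binom_def e1 pq_fact_Suc)
    also have "\<dots> = q^(n-k) * (pq_fact n p q / (pq_fact k p q * (pq_fact d p q * pq_int (Suc d) p q)))
        + p^(Suc k) * (pq_fact n p q / (pq_fact k p q * pq_int (Suc k) p q * pq_fact d p q))"
      unfolding sp e1 using ip fp[of k] fp[of d] by (simp add: field_simps)
    also have "\<dots> = q^(n-k) * cb p q n k + p^(Suc k) * cb p q n (Suc k)"
      using kn by (simp add: cb_def pq_binom_def e1 pq_fact_Suc)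
    finally show ?thesis .
  qed
qed

lemma cb_absorb: assumes "0 < q" "q < p"
  shows "cb p q (Suc m) (Suc k) * pq_int (Suc k) p q = pq_int (Suc m) p q * cb p q m k"
proof (cases "k \<le> m")
  case False then show ?thesis by (simp add: cb_def)
next
  case True
  note fp = pq_fact_pos[OF assms(1) less_imp_le[OF assms(2)]]
  have "Suc m - Suc k = m - k" by simp
  then show ?thesis using True fp[of m] fp[of k] fp[of "m-k"] pq_int_pos[OF assms(1) less_imp_le[OF assms(2)], of "Suc k"]
    by (simp add: cb_def pq_binom_def pq_fact_Suc field_simps)
qed

definition tri :: "nat \<Rightarrow> nat" where "tri k = k * (k - 1) div 2"

lemma tri_0[simp]: "tri 0 = 0" by (simp add: tri_def)
lemma tri_Suc: "tri (Suc k) = tri k + k"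
proof -
  have "Suc k * (Suc k - 1) = k * (k - 1) + 2 * k" by (cases k) (simp_all add: algebra_simps)
  then show ?thesis unfolding tri_def by simp
qed

definition Pr :: "real \<Rightarrow> real \<Rightarrow> nat \<Rightarrow> real \<Rightarrow> real" where
  "Pr p q m x = (\<Prod>s<m. p^s - q^s * x)"

lemma Pr_0[simp]: "Pr p q 0 x = 1" by (simp add: Pr_def)
lemma Pr_Suc: "Pr p q (Suc m) x = Pr p q m x * (p^m - q^m * x)" by (simp add: Pr_def)

lemma Pr_nonneg: assumes "0 \<le> q" "q \<le> p" "0 \<le> x" "x \<le> 1" shows "Pr p q m x \<ge> 0"
  unfolding Pr_def
proof (rule prod_nonneg)
  fix s assume "s \<in> {..<m}"
  have "q^s * x \<le> q^s * 1" using assms by (intro mult_left_mono) auto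
  also have "\<dots> \<le> p^s" using assms by (simp add: power_mono)
  finally show "0 \<le> p^s - q^s * x" by simp
qed

definition wt :: "real \<Rightarrow> real \<Rightarrow> nat \<Rightarrow> nat \<Rightarrow> real \<Rightarrow> real" where
  "wt p q n k x = cb p q n k * p^tri k * x^k * Pr p q (n-k) x"

lemma wt_out: "n < k \<Longrightarrow> wt p q n k x = 0" by (simp add: wt_def cb_def)

lemma wt_step: assumes "0 < q" "q < p" "k \<le> n"
  shows "wt p q (Suc n) (Suc k) x = wt p q n k x * (q^(n-k)*p^k*x)
     + wt p q n (Suc k) x * (p^(Suc k)*(p^(n - Suc k) - q^(n - Suc k)*x))"
proof (cases "k = n")
  case True
  have "cb p q n (Suc n) = 0" by (simp add: cb_def)
  then show ?thesis using True by (simp add: wt_def cb_pascal[OF assms(1,2)] tri_Suc power_add algebra_simps)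
next
  case False
  then have e: "n - k = Suc (n - Suc k)" "Suc n - Suc k = Suc (n - Suc k)" using assms(3) by auto
  show ?thesis unfolding wt_def cb_pascal[OF assms(1,2)] tri_Suc e Pr_Suc
    by (simp add: power_add algebra_simps)
qed

lemma W_sum: assumes "0 < q" "q < p"
  shows "(\<Sum>k\<le>n. wt p q n k x) = p^tri n"
proof (induction n)
  case 0
  then show ?case using assms by (simp add: wt_def)
next
  case (Suc n)
  define F where "F j = wt p q n j x * (q^(n-j)*p^j*x)" for j
  define G where "G j = wt p q n j x * (p^j*(p^(n-j) - q^(n-j)*x))" for j
  have "(\<Sum>k\<le>Suc n. wt p q (Suc n) k x) = wt p q (Suc n) 0 x + (\<Sum>k\<le>n. wt p q (Suc n) (Suc k) x)"
    by (rule sum.atMost_Suc_shift)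
  also have "wt p q (Suc n) 0 x = G 0" using assms by (simp add: wt_def G_def Pr_Suc)
  also have "(\<Sum>k\<le>n. wt p q (Suc n) (Suc k) x) = (\<Sum>k\<le>n. F k + G (Suc k))"
    by (rule sum.cong) (auto simp: wt_step[OF assms] F_def G_def)
  also have "G 0 + (\<Sum>k\<le>n. F k + G (Suc k)) = (\<Sum>k\<le>n. F k) + (G 0 + (\<Sum>k\<le>n. G (Suc k)))"
    by (simp add: sum.distrib)
  also have "G 0 + (\<Sum>k\<le>n. G (Suc k)) = (\<Sum>k\<le>Suc n. G k)"
    by (rule sum.atMost_Suc_shift[symmetric])
  also have "\<dots> = (\<Sum>k\<le>n. G k)" by (simp add: G_def wt_out)
  also have "(\<Sum>k\<le>n. F k) + (\<Sum>k\<le>n. G k) = (\<Sum>k\<le>n. wt p q n k x * p^n)"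
    unfolding sum.distrib[symmetric]
  proof (rule sum.cong)
    fix k assume "k \<in> {..n}"
    then have "p^k * p^(n-k) = p^n" by (simp add: power_add[symmetric])
    then show "F k + G k = wt p q n k x * p^n" unfolding F_def G_def by (simp add: algebra_simps)
  qed simp
  also have "\<dots> = p^tri (Suc n)" using Suc by (simp add: sum_distrib_right[symmetric] tri_Suc power_add)
  finally show ?case .
qed

lemma shift_sum: assumes "0 < q" "q < p"
  shows "(\<Sum>k\<le>Suc m. wt p q (Suc m) k x * (p^(Suc m - k) * pq_int k p q) * h k)
    = pq_int (Suc m) p q * x * p^m * (\<Sum>k\<le>m. wt p q m k x * h (Suc k))"
proof -
  have "(\<Sum>k\<le>Suc m. wt p q (Suc m) k x * (p^(Suc m - k) * pq_int k p q) * h k)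
     = (\<Sum>k\<le>m. wt p q (Suc m) (Suc k) x * (p^(Suc m - Suc k) * pq_int (Suc k) p q) * h (Suc k))"
    by (subst sum.atMost_Suc_shift) simp
  also have "\<dots> = (\<Sum>k\<le>m. pq_int (Suc m) p q * x * p^m * (wt p q m k x * h (Suc k)))"
  proof (rule sum.cong)
    fix k assume "k \<in> {..m}"
    then have pk: "p^k * p^(m-k) = p^m" by (simp add: power_add[symmetric])
    have "wt p q (Suc m) (Suc k) x * (p^(Suc m - Suc k) * pq_int (Suc k) p q) * h (Suc k)
      = (cb p q (Suc m) (Suc k) * pq_int (Suc k) p q) * p^tri k * x^k * Pr p q (m-k) x * x * (p^k * p^(m-k)) * h (Suc k)"
      unfolding wt_def tri_Suc by (simp add: power_add algebra_simps)
    also have "\<dots> = pq_int (Suc m) p q * x * p^m * (wt p q m k x * h (Suc k))"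
      unfolding cb_absorb[OF assms] pk wt_def by (simp add: algebra_simps)
    finally show "wt p q (Suc m) (Suc k) x * (p^(Suc m - Suc k) * pq_int (Suc k) p q) * h (Suc k)
      = pq_int (Suc m) p q * x * p^m * (wt p q m k x * h (Suc k))" .
  qed simp
  also have "\<dots> = pq_int (Suc m) p q * x * p^m * (\<Sum>k\<le>m. wt p q m k x * h (Suc k))"
    by (simp add: sum_distrib_left)
  finally show ?thesis .
qed

lemma M1_sum: assumes "0 < q" "q < p"
  shows "(\<Sum>k\<le>n. wt p q n k x * (p^(n - k) * pq_int k p q)) = pq_int n p q * x * p^tri n"
proof (cases n)
  case 0 then show ?thesis by simp
next
  case (Suc m)
  have "(\<Sum>k\<le>n. wt p q n k x * (p^(n - k) * pq_int k p q))
     = (\<Sum>k\<le>Suc m. wt p q (Suc m) k x * (p^(Suc m - k) * pq_int k p q) * (\<lambda>_. 1) k)"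
    using Suc by simp
  also have "\<dots> = pq_int (Suc m) p q * x * p^m * p^tri m"
    unfolding shift_sum[OF assms] using W_sum[OF assms] by simp
  finally show ?thesis using Suc by (simp add: tri_Suc power_add)
qed

lemma J_sum: assumes "0 < q" "q < p"
  shows "(\<Sum>k\<le>n. wt p q n k x * (p^(n - k) * pq_int k p q) * (p^(n - k) * pq_int (k - 1) p q))
    = pq_int n p q * pq_int (n - 1) p q * x^2 * p^tri n"
proof (cases n)
  case 0 then show ?thesis by simp
next
  case (Suc m)
  have "(\<Sum>k\<le>n. wt p q n k x * (p^(n - k) * pq_int k p q) * (p^(n - k) * pq_int (k - 1) p q))
     = (\<Sum>k\<le>Suc m. wt p q (Suc m) k x * (p^(Suc m - k) * pq_int k p q) * (\<lambda>k. p^(Suc m - k) * pq_int (k - 1) p q) k)"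
    using Suc by simp
  also have "\<dots> = pq_int (Suc m) p q * x * p^m * (pq_int m p q * x * p^tri m)"
    unfolding shift_sum[OF assms] using M1_sum[OF assms, of m x] by simp
  finally show ?thesis using Suc by (simp add: tri_Suc power_add power2_eq_square algebra_simps)
qed

lemma pq_int_nonneg: "0 \<le> q \<Longrightarrow> 0 \<le> p \<Longrightarrow> pq_int m p q \<ge> 0"
  unfolding pq_int_def by (intro sum_nonneg) auto

lemma wt_nonneg: assumes "0 < q" "q < p" "0 \<le> x" "x \<le> 1" shows "wt p q n k x \<ge> 0"
  unfolding wt_def using assms cb_nonneg[of q p n k] Pr_nonneg[of q p x "n-k"] by simp

lemma u_le: assumes "0 < q" "q < p" "k \<le> n"
  shows "p^(n-k) * pq_int k p q \<le> pq_int n p q"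
proof -
  have "pq_int n p q = pq_int (k + (n-k)) p q" using assms by simp
  also have "\<dots> = p^(n-k) * pq_int k p q + q^k * pq_int (n-k) p q"
    using assms by (intro pq_int_split) simp
  finally show ?thesis using pq_int_nonneg[of q p "n-k"] assms by simp
qed

lemma D_eq: assumes "0 < q" "q < p" "n \<ge> 1" "0 \<le> \<beta>"
  shows "(\<Sum>k\<le>n. wt p q n k x / p^tri n * ((p^(n-k)*pq_int k p q + \<alpha>)/(pq_int n p q + \<beta>) - x)^2)
    = ((\<alpha> - x*\<beta>)^2 + pq_int n p q * p^(n-1) * x * (1 - x)) / (pq_int n p q + \<beta>)^2"
proof -
  define N where "N = pq_int n p q"
  define P where "P = p^tri n"
  define u where "u k = p^(n-k)*pq_int k p q" for k
  define c where "c = \<alpha> - x*(N+\<beta>)"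
  have pq: "p \<noteq> q" using assms by simp
  have Npos: "N > 0" unfolding N_def using pq_int_pos[of q p n] assms by simp
  have Ppos: "P > 0" unfolding P_def using assms by simp
  have Nb: "N + \<beta> > 0" using Npos assms by simp
  have W: "(\<Sum>k\<le>n. wt p q n k x) = P" unfolding P_def using W_sum[OF assms(1,2)] .
  have M1: "(\<Sum>k\<le>n. wt p q n k x * u k) = N * x * P"
    unfolding P_def N_def u_def using M1_sum[OF assms(1,2)] .
  have qN: "q * pq_int (n-1) p q = N - p^(n-1)"
  proof -
    have "pq_int (1 + (n-1)) p q = p^(n-1) * pq_int 1 p q + q^1 * pq_int (n-1) p q"
      by (rule pq_int_split[OF pq])
    then show ?thesis using assms(3) by (simp add: N_def pq_int_def)
  qed
  have M2: "(\<Sum>k\<le>n. wt p q n k x * (u k)^2) = (p^(n-1)*N*x + q*N*pq_int (n-1) p q*x^2) * P"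
  proof -
    have "(\<Sum>k\<le>n. wt p q n k x * (u k)^2) = (\<Sum>k\<le>n. p^(n-1) * (wt p q n k x * u k)
       + q * (wt p q n k x * (p^(n - k) * pq_int k p q) * (p^(n - k) * pq_int (k - 1) p q)))"
    proof (rule sum.cong)
      fix k assume k: "k \<in> {..n}"
      show "wt p q n k x * (u k)^2 = p^(n-1) * (wt p q n k x * u k)
       + q * (wt p q n k x * (p^(n - k) * pq_int k p q) * (p^(n - k) * pq_int (k - 1) p q))"
      proof (cases k)
        case 0 then show ?thesis by (simp add: u_def)
      next
        case (Suc j)
        have "pq_int (1 + j) p q = p^j * pq_int 1 p q + q^1 * pq_int j p q"
          by (rule pq_int_split[OF pq])
        then have ik: "pq_int k p q = p^j + q * pq_int j p q" using Suc by (simp add: pq_int_def)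
        have pp: "p^(n-k) * p^j = p^(n-1)" using Suc k by (simp add: power_add[symmetric])
        have "(u k)^2 = u k * (p^(n-k) * (p^j + q * pq_int j p q))" unfolding u_def ik
          by (simp add: power2_eq_square)
        also have "\<dots> = u k * (p^(n-k) * p^j) + q * (u k * (p^(n-k) * pq_int j p q))"
          by (simp add: algebra_simps)
        finally show ?thesis unfolding pp using Suc by (simp add: u_def algebra_simps)
      qed
    qed simp
    also have "\<dots> = p^(n-1) * (N*x*P) + q * (N * pq_int (n-1) p q * x^2 * P)"
      unfolding sum.distrib sum_distrib_left[symmetric] M1 J_sum[OF assms(1,2)] P_def N_def by simp
    finally show ?thesis by (simp add: algebra_simps)
  qed
  have "(\<Sum>k\<le>n. wt p q n k x / p^tri n * ((p^(n-k)*pq_int k p q + \<alpha>)/(pq_int n p q + \<beta>) - x)^2)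
     = (\<Sum>k\<le>n. (wt p q n k x * (u k)^2 + 2*c*(wt p q n k x * u k) + c^2 * wt p q n k x) / (P * (N+\<beta>)^2))"
  proof (rule sum.cong)
    fix k
    have "(u k + \<alpha>)/(N+\<beta>) - x = (u k + c)/(N+\<beta>)" using Nb unfolding c_def by (simp add: field_simps)
    then show "wt p q n k x / p^tri n * ((p^(n-k)*pq_int k p q + \<alpha>)/(pq_int n p q + \<beta>) - x)^2
      = (wt p q n k x * (u k)^2 + 2*c*(wt p q n k x * u k) + c^2 * wt p q n k x) / (P * (N+\<beta>)^2)"
      unfolding u_def[symmetric] N_def[symmetric] P_def[symmetric] using Nb Ppos
      by (simp add: field_simps power2_eq_square)
  qed simp
  also have "\<dots> = ((\<Sum>k\<le>n. wt p q n k x * (u k)^2) + 2*c*(\<Sum>k\<le>n. wt p q n k x * u k) + c^2 * (\<Sum>k\<le>n. wt p q n k x)) / (P * (N+\<beta>)^2)"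
    unfolding sum_divide_distrib[symmetric] sum.distrib sum_distrib_left ..
  also have "\<dots> = ((p^(n-1)*N*x + N*(N - p^(n-1))*x^2) * P + 2*c*(N * x * P) + c^2 * P) / (P * (N+\<beta>)^2)"
  proof -
    have "q*N*pq_int (n-1) p q = N*(N - p^(n-1))" using qN by (metis mult.assoc mult.commute)
    then show ?thesis unfolding M2 M1 W by simp
  qed
  also have "\<dots> = (P * ((\<alpha> - x*\<beta>)^2 + N * p^(n-1) * x * (1 - x))) / (P * (N+\<beta>)^2)"
  proof -
    have "(p^(n-1)*N*x + N*(N - p^(n-1))*x^2) * P + 2*c*(N * x * P) + c^2 * P
       = P * ((\<alpha> - x*\<beta>)^2 + N * p^(n-1) * x * (1 - x))"
      unfolding c_def by (simp add: algebra_simps power2_eq_square)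
    then show ?thesis by simp
  qed
  also have "\<dots> = ((\<alpha> - x*\<beta>)^2 + N * p^(n-1) * x * (1 - x)) / (N+\<beta>)^2"
    using Ppos by simp
  finally show ?thesis unfolding N_def .
qed

lemma point_bound:
  assumes "0 < q" "q < p" "p \<le> 1" "n \<ge> 1" "0 \<le> x" "x \<le> 1" "0 \<le> \<alpha>" "\<alpha> \<le> \<beta>" "K \<ge> 0"
    and key: "\<And>s. s \<in> {0..1} \<Longrightarrow> \<bar>f s - f x\<bar> \<le> e + K * (s - x)^2"
  shows "\<bar>pq_bernstein_stancu \<alpha> \<beta> n p q f x - f x\<bar>
     \<le> e + K * (\<beta>^2 / (pq_int n p q)^2 + 1 / pq_int n p q)"
proof -
  define N where "N = pq_int n p q"
  define b where "b k = wt p q n k x / p^tri n" for k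
  define t where "t k = (p^(n-k)*pq_int k p q + \<alpha>)/(N + \<beta>)" for k
  have Npos: "N > 0" unfolding N_def using pq_int_pos[of q p n] assms by simp
  have b0: "b k \<ge> 0" for k unfolding b_def using wt_nonneg[of q p x n k] assms by simp
  have bsum: "(\<Sum>k\<le>n. b k) = 1" unfolding b_def sum_divide_distrib[symmetric] W_sum[OF assms(1,2)]
    using assms by simp
  have t01: "t k \<in> {0..1}" if "k \<le> n" for k
  proof -
    have "p^(n-k)*pq_int k p q \<le> N" unfolding N_def using u_le[OF assms(1,2) that] .
    moreover have "p^(n-k)*pq_int k p q \<ge> 0" using pq_int_nonneg[of q p k] assms by simp
    ultimately show ?thesis unfolding t_def using assms Npos by (auto simp: field_simps)
  qed
  have S: "pq_bernstein_stancu \<alpha> \<beta> n p q f x = (\<Sum>k\<le>n. b k * f (t k))"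
    unfolding pq_bernstein_stancu_def atLeast0AtMost atLeast0LessThan sum_distrib_left
  proof (rule sum.cong)
    fix k assume "k \<in> {..n}"
    then show "1 / p ^ (n * (n - 1) div 2) * (pq_binom n k p q * p ^ (k * (k - 1) div 2) * x ^ k *
          (\<Prod>s<n - k. p ^ s - q ^ s * x) * f ((p ^ (n - k) * pq_int k p q + \<alpha>) / (pq_int n p q + \<beta>)))
         = b k * f (t k)"
      unfolding b_def t_def N_def wt_def cb_def Pr_def tri_def by simp
  qed simp
  have D: "(\<Sum>k\<le>n. b k * (t k - x)^2) \<le> \<beta>^2/N^2 + 1/N"
  proof -
    have "(\<Sum>k\<le>n. b k * (t k - x)^2) = ((\<alpha> - x*\<beta>)^2 + N * p^(n-1) * x * (1 - x)) / (N + \<beta>)^2"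
      unfolding b_def t_def N_def using D_eq[OF assms(1,2,4), of \<beta> x \<alpha>] assms by simp
    also have "\<dots> \<le> (\<beta>^2 + N) / (N + \<beta>)^2"
    proof (rule divide_right_mono)
      have "\<bar>\<alpha> - x*\<beta>\<bar> \<le> \<beta>"
      proof -
        have h: "x*\<beta> \<le> \<beta>" "0 \<le> x*\<beta>" using assms by (auto simp: mult_left_le_one_le)
        show ?thesis unfolding abs_le_iff using h assms(7,8) by linarith
      qed
      then have "(\<alpha> - x*\<beta>)^2 \<le> \<beta>^2" by (metis abs_le_square_iff abs_of_nonneg assms(7,8) order_trans)
      moreover have "p^(n-1) * x * (1 - x) \<le> 1"
      proof -
        have "p^(n-1) \<le> 1" "0 \<le> p^(n-1)" using assms by (auto simp: power_le_one)
        moreover have "x * (1-x) \<le> 1" "0 \<le> x*(1-x)" using assms by (auto simp: mult_le_one)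
        ultimately show ?thesis by (metis mult.assoc mult_le_one)
      qed
      then have "N * (p^(n-1) * x * (1 - x)) \<le> N" using Npos by (simp add: mult_left_le)
      ultimately show "(\<alpha> - x*\<beta>)^2 + N * p^(n-1) * x * (1 - x) \<le> \<beta>^2 + N"
        by (simp add: mult.assoc)
    qed simp
    also have "\<dots> \<le> (\<beta>^2 + N) / N^2"
      using Npos assms by (intro divide_left_mono) (auto intro: power_mono)
    also have "\<dots> = \<beta>^2/N^2 + 1/N" using Npos by (simp add: field_simps power2_eq_square)
    finally show ?thesis .
  qed
  have "\<bar>pq_bernstein_stancu \<alpha> \<beta> n p q f x - f x\<bar> = \<bar>\<Sum>k\<le>n. b k * (f (t k) - f x)\<bar>"
    unfolding S using bsum by (simp add: algebra_simps sum_subtractf sum_distrib_right[symmetric])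
  also have "\<dots> \<le> (\<Sum>k\<le>n. \<bar>b k * (f (t k) - f x)\<bar>)" by (rule sum_abs)
  also have "\<dots> \<le> (\<Sum>k\<le>n. b k * e + K * (b k * (t k - x)^2))"
  proof (rule sum_mono)
    fix k assume "k \<in> {..n}"
    then have "\<bar>f (t k) - f x\<bar> \<le> e + K * (t k - x)^2" using key t01 by auto
    then have "b k * \<bar>f (t k) - f x\<bar> \<le> b k * (e + K * (t k - x)^2)" using b0 by (simp add: mult_left_mono)
    moreover have "\<bar>b k * (f (t k) - f x)\<bar> = b k * \<bar>f (t k) - f x\<bar>"
      using b0[of k] by (simp add: abs_mult)
    moreover have "b k * (e + K * (t k - x)^2) = b k * e + K * (b k * (t k - x)^2)"
      by (simp add: algebra_simps)
    ultimately show "\<bar>b k * (f (t k) - f x)\<bar> \<le> b k * e + K * (b k * (t k - x)^2)"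
      by linarith
  qed
  also have "\<dots> = e + K * (\<Sum>k\<le>n. b k * (t k - x)^2)"
    by (simp add: sum.distrib sum_distrib_left[symmetric] sum_distrib_right[symmetric] bsum)
  also have "\<dots> \<le> e + K * (\<beta>^2/N^2 + 1/N)" using D assms by (simp add: mult_left_mono)
  finally show ?thesis unfolding N_def .
qed

theorem theorem3p1p1:
  fixes \<alpha> \<beta> :: real and p q :: "nat \<Rightarrow> real" and f :: "real \<Rightarrow> real"
  assumes "0 \<le> \<alpha>" and "\<alpha> \<le> \<beta>"
    and "\<And>n. n \<ge> 1 \<Longrightarrow> 0 < q n \<and> q n < 1"
    and "\<And>n. n \<ge> 1 \<Longrightarrow> q n < p n \<and> p n \<le> 1"
    and "p \<longlonglongrightarrow> 1" and "q \<longlonglongrightarrow> 1"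
    and "(\<lambda>n. p n ^ n) \<longlonglongrightarrow> 1" and "(\<lambda>n. q n ^ n) \<longlonglongrightarrow> 1"
    and "continuous_on {0..1} f"
  shows "(\<lambda>n. SUP x\<in>{0..1}. \<bar>pq_bernstein_stancu \<alpha> \<beta> n (p n) (q n) f x - f x\<bar>)
           \<longlonglongrightarrow> 0"
proof (rule LIMSEQ_I)
  fix r :: real assume r: "0 < r"
  have "bounded (f ` {0..1})"
    by (rule compact_imp_bounded[OF compact_continuous_image[OF assms(9) compact_Icc]])
  then obtain M where M: "M > 0" "\<And>s. s \<in> {0..1} \<Longrightarrow> \<bar>f s\<bar> \<le> M"
    unfolding bounded_pos by auto
  have "uniformly_continuous_on {0..1} f"
    by (rule compact_uniformly_continuous[OF assms(9) compact_Icc])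
  then obtain d where d: "d > 0" "\<And>s x. s \<in> {0..1} \<Longrightarrow> x \<in> {0..1} \<Longrightarrow> dist s x < d \<Longrightarrow> dist (f s) (f x) < r/2"
    unfolding uniformly_continuous_on_def using r by (metis half_gt_zero)
  define K where "K = 2 * M / d^2"
  have K0: "K \<ge> 0" unfolding K_def using M d by simp
  have key: "\<bar>f s - f x\<bar> \<le> r/2 + K * (s - x)^2" if "s \<in> {0..1}" "x \<in> {0..1}" for s x
  proof (cases "\<bar>s - x\<bar> < d")
    case True
    then have "\<bar>f s - f x\<bar> < r/2" using d(2)[OF that] by (simp add: dist_real_def)
    moreover have "K * (s - x)^2 \<ge> 0" using K0 by simp
    ultimately show ?thesis by linarith
  next
    case False
    then have "d^2 \<le> (s - x)^2" using d(1) by (metis abs_le_square_iff abs_of_pos not_less)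
    then have "K * d^2 \<le> K * (s - x)^2" using K0 by (simp add: mult_left_mono)
    moreover have "K * d^2 = 2 * M" unfolding K_def using d by simp
    moreover have "\<bar>f s - f x\<bar> \<le> 2 * M" using M(2)[OF that(1)] M(2)[OF that(2)] by linarith
    ultimately show ?thesis using r by linarith
  qed
  from assms(8) have "eventually (\<lambda>n. q n ^ n > 1/2) sequentially"
    by (rule order_tendstoD) simp
  then obtain n0 where n0: "\<And>n. n \<ge> n0 \<Longrightarrow> q n ^ n > 1/2" unfolding eventually_sequentially by auto
  define C where "C = K * (4 * \<beta>^2 + 2)"
  have C0: "C \<ge> 0" unfolding C_def using K0 by simp
  obtain n1 :: nat where n1: "4 * C / r < real n1" using reals_Archimedean2 by blast
  show "\<exists>no. \<forall>n\<ge>no. norm ((SUP x\<in>{0..1}. \<bar>pq_bernstein_stancu \<alpha> \<beta> n (p n) (q n) f x - f x\<bar>) - 0) < r"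
  proof (intro exI allI impI)
    fix n assume nge: "max (max n0 n1) 1 \<le> n"
    then have n1': "n \<ge> 1" "n \<ge> n0" "n \<ge> n1" by auto
    have qp: "0 < q n" "q n < p n" "p n \<le> 1" using assms(3,4)[OF n1'(1)] by auto
    define N where "N = pq_int n (p n) (q n)"
    have "N \<ge> real n * q n ^ (n - 1)" unfolding N_def using pq_int_ge[of "q n" "p n" n] qp by simp
    moreover have "q n ^ (n-1) \<ge> q n ^ n" using qp by (intro power_decreasing) auto
    moreover have "real n * (1/2) \<le> real n * q n ^ n" using n0[OF n1'(2)] by (intro mult_left_mono) auto
    moreover have "real n * q n ^ n \<le> real n * q n ^ (n-1)"
      using \<open>q n ^ (n-1) \<ge> q n ^ n\<close> by (intro mult_left_mono) auto
    ultimately have Nge: "N \<ge> real n / 2" by linarith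
    have npos: "real n > 0" using n1' by simp
    have Npos: "N > 0" using Nge npos by linarith
    have bnd: "\<beta>^2 / N^2 + 1 / N \<le> (4 * \<beta>^2 + 2) / real n"
    proof -
      have i1: "1 / N \<le> 2 / real n" using Nge npos Npos by (simp add: field_simps)
      have "N^2 \<ge> (real n / 2)^2" using Nge npos by (intro power_mono) auto
      moreover have "(real n / 2)^2 \<ge> real n / 4" using n1'(1) by (simp add: power2_eq_square field_simps)
      ultimately have "N^2 \<ge> real n / 4" by linarith
      then have "1 / N^2 \<le> 4 / real n" using npos Npos by (simp add: field_simps)
      then have "\<beta>^2 * (1 / N^2) \<le> \<beta>^2 * (4 / real n)" by (intro mult_left_mono) auto
      moreover have "(4 * \<beta>^2 + 2) / real n = \<beta>^2 * (4 / real n) + 2 / real n"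
        by (simp add: add_divide_distrib)
      ultimately show ?thesis using i1 by simp
    qed
    have Kb: "K * (\<beta>^2 / N^2 + 1 / N) \<le> C / real n"
      unfolding C_def using mult_left_mono[OF bnd K0] by simp
    have "C / real n < r / 4"
    proof -
      have "4 * C / r < real n" using n1 n1'(3) by linarith
      then show ?thesis using r npos by (simp add: field_simps)
    qed
    then have pb: "\<bar>pq_bernstein_stancu \<alpha> \<beta> n (p n) (q n) f x - f x\<bar> \<le> 3 * r / 4" if "x \<in> {0..1}" for x
    proof -
      have "0 \<le> x" "x \<le> 1" using that by auto
      have "\<bar>pq_bernstein_stancu \<alpha> \<beta> n (p n) (q n) f x - f x\<bar> \<le> r/2 + K * (\<beta>^2 / N^2 + 1 / N)"
        unfolding N_def
        by (rule point_bound[OF qp n1'(1) \<open>0 \<le> x\<close> \<open>x \<le> 1\<close> assms(1,2) K0]) (use key that in auto)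
      then show ?thesis using Kb \<open>C / real n < r / 4\<close> by linarith
    qed
    have sup_le: "(SUP x\<in>{0..1}. \<bar>pq_bernstein_stancu \<alpha> \<beta> n (p n) (q n) f x - f x\<bar>) \<le> 3 * r / 4"
      by (rule cSUP_least) (use pb in auto)
    have "bdd_above ((\<lambda>x. \<bar>pq_bernstein_stancu \<alpha> \<beta> n (p n) (q n) f x - f x\<bar>) ` {0..1})"
      by (rule bdd_aboveI2[where M="3 * r / 4"]) (use pb in auto)
    then have sup_ge: "0 \<le> (SUP x\<in>{0..1}. \<bar>pq_bernstein_stancu \<alpha> \<beta> n (p n) (q n) f x - f x\<bar>)"
      by (rule cSUP_upper2[where x=0]) auto
    show "norm ((SUP x\<in>{0..1}. \<bar>pq_bernstein_stancu \<alpha> \<beta> n (p n) (q n) f x - f x\<bar>) - 0) < r"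
      using sup_le sup_ge r by simp
  qed
qed

end
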